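(* Let $m,n\ge1$. Every $A\in\mathbb{R}^{m\times n}$ can be written as $A=B+C$ with $B,C\in\mathscr{L}_{m,n}$.
   Context: $\Vert\cdot\Vert$ is the supremum norm; a real $m\times n$ matrix $A$ is a Liouville matrix if $A\mathbf{q}-\mathbf{p}\neq\mathbf{0}$ for all nonzero $(\mathbf{q},\mathbf{p})\in\mathbb{Z}^n\times\mathbb{Z}^m$ and for every $N$ there exist $\mathbf{p}\in\mathbb{Z}^m$, $\mathbf{q}\in\mathbb{Z}^n\setminus\{\mathbf{0}\}$ with $\Vert A\mathbf{q}-\mathbf{p}\Vert<\Vert\mathbf{q}\Vert^{-N}$; $\mathscr{L}_{m,n}$ is the set of these. *)

theory Defs
  imports "HOL-Analysis.Analysis"
begin

definition supnorm :: "real ^ 'k \<Rightarrow> real" where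
  "supnorm v = Max (range (\<lambda>i. \<bar>v $ i\<bar>))"

definition ivec :: "int ^ 'k \<Rightarrow> real ^ 'k" where
  "ivec p = (\<chi> i. real_of_int (p $ i))"

text \<open>Liouville matrices: A is m x n (m = CARD('m), n = CARD('n)).\<close>
definition liouville_matrix :: "real ^ 'n ^ 'm \<Rightarrow> bool" where
  "liouville_matrix A \<longleftrightarrow>
     (\<forall>q :: int ^ 'n. \<forall>p :: int ^ 'm. (q, p) \<noteq> (0, 0) \<longrightarrow> A *v ivec q - ivec p \<noteq> 0) \<and>
     (\<forall>N :: nat. \<exists>p :: int ^ 'm. \<exists>q :: int ^ 'n. q \<noteq> 0 \<and>
        supnorm (A *v ivec q - ivec p) < supnorm (ivec q) powr (- real N))"

end

theory Submission
  imports Defs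
begin

lemma cont_mv: "continuous (at B0) (\<lambda>B::real^'n^'m. B *v x)"
proof -
  have "linear (\<lambda>B::real^'n^'m. B *v x)"
    by (rule linearI) (auto simp: matrix_vector_mult_def vec_eq_iff sum.distrib sum_distrib_left algebra_simps)
  then show ?thesis by (intro linear_continuous_at) (simp add: linear_conv_bounded_linear)
qed

lemma supnorm_less: "supnorm v < c \<longleftrightarrow> (\<forall>i. \<bar>v $ i\<bar> < c)"
  unfolding supnorm_def by (subst Max_less_iff) auto

lemma supnorm_ge: "\<bar>v $ i\<bar> \<le> supnorm v"
  unfolding supnorm_def by (rule Max_ge) auto

lemma norm_mat_le: "norm (M::real^'n^'m) \<le> (\<Sum>i\<in>UNIV. \<Sum>j\<in>UNIV. \<bar>M$i$j\<bar>)"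
proof -
  have "norm M \<le> (\<Sum>i\<in>UNIV. norm (M$i))" by (simp add: norm_vec_def L2_set_le_sum)
  also have "\<dots> \<le> (\<Sum>i\<in>UNIV. \<Sum>j\<in>UNIV. \<bar>M$i$j\<bar>)" by (intro sum_mono norm_le_l1_cart)
  finally show ?thesis .
qed

lemma sum_delta_mult:
  fixes f :: "'a::finite \<Rightarrow> real"
  shows "(\<Sum>j\<in>UNIV. f j * (if j = j0 then c else 0)) = f j0 * c"
proof -
  have "(\<Sum>j\<in>UNIV. f j * (if j = j0 then c else 0)) = (\<Sum>j\<in>UNIV. if j = j0 then f j0 * c else 0)"
    by (intro sum.cong) auto
  also have "\<dots> = f j0 * c" by simp
  finally show ?thesis .
qed

definition G1 :: "int^'n \<Rightarrow> int^'m \<Rightarrow> (real^'n^'m) set" where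
  "G1 q p = {B. (q,p) = (0,0) \<or> B *v ivec q - ivec p \<noteq> 0}"

definition G2 :: "nat \<Rightarrow> (real^'n^'m) set" where
  "G2 N = {B. \<exists>p q. q \<noteq> 0 \<and> supnorm (B *v ivec q - ivec p) < supnorm (ivec q) powr (- real N)}"

lemma open_G1: "open (G1 q p)"
proof (cases "(q,p) = (0,0)")
  case True then show ?thesis by (simp add: G1_def)
next
  case False
  have "G1 q p = (\<lambda>B. B *v ivec q - ivec p) -` (- {0})" using False by (auto simp: G1_def)
  also have "open \<dots>"
    by (intro continuous_open_vimage open_Compl closed_singleton continuous_intros cont_mv)
  finally show ?thesis .
qed

lemma open_G2: "open (G2 N :: (real^'n^'m) set)"
proof -
  define S where "S p q = {B::real^'n^'m. q \<noteq> 0 \<and> supnorm (B *v ivec q - ivec p) < supnorm (ivec q) powr (- real N)}" for p q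
  have eq: "G2 N = (\<Union>p. \<Union>q. S p q)" by (auto simp: G2_def S_def)
  have "open (S p q)" for p q
  proof (cases "q = 0")
    case True then show ?thesis by (simp add: S_def)
  next
    case False
    have "S p q = (\<Inter>i. {B. \<bar>(B *v ivec q - ivec p) $ i\<bar> < supnorm (ivec q) powr (- real N)})"
      using False by (auto simp: S_def supnorm_less)
    also have "open \<dots>"
      by (intro open_INT[OF finite_class.finite_UNIV] ballI open_Collect_less continuous_at_imp_continuous_on
           continuous_intros cont_mv)
    finally show ?thesis .
  qed
  then show ?thesis unfolding eq by auto
qed

lemma dense_G1:
  assumes "e > 0" shows "\<exists>Y \<in> G1 q p. dist Y (X::real^'n^'m) < e"
proof (cases "X \<in> G1 q p")
  case True then show ?thesis using assms by (intro bexI[of _ X]) auto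
next
  case False
  then have qp: "(q,p) \<noteq> (0,0)" and X0: "X *v ivec q - ivec p = 0" by (auto simp: G1_def)
  have "q \<noteq> 0"
  proof
    assume "q = 0"
    then have "ivec p = 0" using X0 by (simp add: ivec_def vec_eq_iff matrix_vector_mult_def)
    then have "p = 0" by (simp add: ivec_def vec_eq_iff)
    with \<open>q = 0\<close> qp show False by simp
  qed
  then obtain j where qj: "q $ j \<noteq> 0" by (auto simp: vec_eq_iff)
  define E :: "real^'n^'m" where "E = (\<chi> i k. if k = j then 1 else 0)"
  define t where "t = e / (2 * (norm E + 1))"
  have "norm E + 1 > 0" by (simp add: add_nonneg_pos)
  then have tpos: "t > 0" using assms unfolding t_def by (intro divide_pos_pos) auto
  define Y where "Y = X + t *\<^sub>R E"
  have Ev: "(E *v v) $ i = v $ j" for v i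
    by (simp add: E_def matrix_vector_mult_def mult.commute sum_delta_mult[where f="\<lambda>k. v $ k" and c=1, simplified])
  have "(Y *v ivec q - ivec p) $ i = (X *v ivec q - ivec p) $ i + t * (E *v ivec q) $ i" for i
    by (simp add: Y_def matrix_vector_mult_def sum.distrib sum_distrib_left algebra_simps)
  then have "(Y *v ivec q - ivec p) $ i = t * real_of_int (q $ j)" for i
    using X0 by (simp add: Ev ivec_def)
  then have "Y \<in> G1 q p" using tpos qj by (auto simp: G1_def vec_eq_iff)
  moreover have "dist Y X < e"
  proof -
    have "dist Y X = t * norm E" using tpos by (simp add: Y_def dist_norm)
    also have "\<dots> < e"
    proof -
      have "t * norm E = e * (norm E / (2 * (norm E + 1)))" by (simp add: t_def)
      also have "\<dots> < e * 1"
        using assms norm_ge_zero[of E] by (intro mult_strict_left_mono) (auto simp: divide_less_eq, smt (verit) norm_ge_zero)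
      finally show ?thesis by simp
    qed
    finally show ?thesis .
  qed
  ultimately show ?thesis by blast
qed

lemma dense_G2:
  assumes "e > 0" shows "\<exists>Y \<in> G2 N. dist Y (X::real^'n^'m) < e"
proof -
  define K where "K = real (CARD('m) * CARD('n))"
  obtain d :: nat where d: "d > K / e" "d \<ge> 1"
    by (metis real_arch_simple less_le_not_le linorder_not_le max.cobounded1 max.cobounded2 nat_le_real_less of_nat_le_iff real_nat_ceiling_ge order.trans
        reals_Archimedean2 less_le_trans le_less_trans one_le_numeral)
  have dpos: "real d > 0" using d by simp
  define Y :: "real^'n^'m" where "Y = (\<chi> i j. of_int \<lfloor>real d * X$i$j\<rfloor> / real d)"
  define j0 :: 'n where "j0 = undefined"
  define q :: "int^'n" where "q = (\<chi> j. if j = j0 then int d else 0)"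
  define p :: "int^'m" where "p = (\<chi> i. \<lfloor>real d * X$i$j0\<rfloor>)"
  have q0: "q \<noteq> 0" using d by (auto simp: q_def vec_eq_iff intro!: exI[of _ j0])
  have "Y *v ivec q - ivec p = 0"
  proof -
    have "(Y *v ivec q) $ i = real_of_int \<lfloor>real d * X$i$j0\<rfloor>" for i
    proof -
      have "(Y *v ivec q) $ i = (\<Sum>j\<in>UNIV. Y$i$j * (if j = j0 then real d else 0))"
        by (simp add: matrix_vector_mult_def ivec_def q_def if_distrib cong: if_cong)
      also have "\<dots> = Y$i$j0 * real d" by (rule sum_delta_mult)
      also have "\<dots> = real_of_int \<lfloor>real d * X$i$j0\<rfloor>" using dpos by (simp add: Y_def)
      finally show ?thesis .
    qed
    then show ?thesis by (simp add: vec_eq_iff ivec_def p_def)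
  qed
  moreover have "supnorm (ivec q) > 0"
    using supnorm_ge[of "ivec q" j0] dpos by (simp add: ivec_def q_def)
  ultimately have "Y \<in> G2 N" using q0
    unfolding G2_def by (auto simp: supnorm_def intro!: exI[of _ p] exI[of _ q])
  moreover have "dist Y X < e"
  proof -
    have c: "\<bar>(Y - X)$i$j\<bar> \<le> 1 / real d" for i j
    proof -
      have "real_of_int \<lfloor>real d * X$i$j\<rfloor> \<le> real d * X$i$j" "real d * X$i$j < real_of_int \<lfloor>real d * X$i$j\<rfloor> + 1"
        by linarith+
      then have a: "\<bar>real_of_int \<lfloor>real d * X$i$j\<rfloor> - real d * X$i$j\<bar> \<le> 1" by linarith
      have "(Y - X)$i$j = (real_of_int \<lfloor>real d * X$i$j\<rfloor> - real d * X$i$j) / real d"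
        using dpos by (simp add: Y_def field_simps)
      then show ?thesis using dpos a by (simp add: abs_divide divide_right_mono)
    qed
    have "dist Y X \<le> (\<Sum>i\<in>UNIV. \<Sum>j\<in>UNIV. \<bar>(Y - X)$i$j\<bar>)"
      unfolding dist_norm by (rule norm_mat_le)
    also have "\<dots> \<le> (\<Sum>i\<in>(UNIV::'m set). \<Sum>j\<in>(UNIV::'n set). 1 / real d)"
      by (intro sum_mono c)
    also have "\<dots> = K / real d" by (simp add: K_def)
    also have "\<dots> < e" using d dpos assms by (simp add: divide_less_eq mult.commute pos_divide_less_eq)
    finally show ?thesis .
  qed
  ultimately show ?thesis by blast
qed

lemma good_set:
  assumes "open T" "\<And>X e. e > 0 \<Longrightarrow> \<exists>Y \<in> T. dist Y (X::real^'n^'m) < e"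
  shows "openin (top_of_set UNIV) T \<and> UNIV \<subseteq> closure T"
  using assms by (auto simp: closure_approachable)

lemma good_set_neg:
  assumes "open T" "\<And>X e. e > 0 \<Longrightarrow> \<exists>Y \<in> T. dist Y (X::real^'n^'m) < e"
  shows "open ((\<lambda>B. A - B) -` T) \<and> (\<forall>X e. e > 0 \<longrightarrow> (\<exists>Y \<in> (\<lambda>B. A - B) -` T. dist Y X < e))"
proof
  show "open ((\<lambda>B. A - B) -` T)"
    by (intro continuous_open_vimage assms continuous_intros)
  show "\<forall>X e. e > 0 \<longrightarrow> (\<exists>Y \<in> (\<lambda>B. A - B) -` T. dist Y X < e)"
  proof (intro allI impI)
    fix X :: "real^'n^'m" and e :: real assume "e > 0"
    then obtain Z where "Z \<in> T" "dist Z (A - X) < e" using assms(2) by blast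
    then show "\<exists>Y \<in> (\<lambda>B. A - B) -` T. dist Y X < e"
      by (intro bexI[of _ "A - Z"]) (auto simp: dist_norm norm_minus_commute algebra_simps)
  qed
qed

theorem mainTheorem8:
  fixes A :: "real ^ 'n ^ 'm"
  shows "\<exists>B C :: real ^ 'n ^ 'm. A = B + C \<and> liouville_matrix B \<and> liouville_matrix C"
proof -
  define G0 :: "(real^'n^'m) set set" where "G0 = range (\<lambda>(q,p). G1 q p) \<union> range G2"
  define G where "G = G0 \<union> (\<lambda>T. (\<lambda>B. A - B) -` T) ` G0"
  have cG: "countable G" unfolding G_def G0_def by auto
  have G0good: "open T \<and> (\<forall>X e. e > 0 \<longrightarrow> (\<exists>Y \<in> T. dist Y (X::real^'n^'m) < e))" if "T \<in> G0" for T
    using that open_G1 open_G2 dense_G1 dense_G2 unfolding G0_def by auto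
  have "openin (top_of_set UNIV) T \<and> UNIV \<subseteq> closure T" if "T \<in> G" for T
  proof -
    { assume "T \<in> G0" then have ?thesis using G0good[of T] by (intro good_set) auto }
    moreover
    { fix T0 assume "T0 \<in> G0" "T = (\<lambda>B. A - B) -` T0"
      then have ?thesis using G0good[of T0] good_set_neg[of T0 A] by (intro good_set) auto }
    ultimately show ?thesis using that unfolding G_def by blast
  qed
  then have "UNIV \<subseteq> closure (\<Inter>G)" by (intro Baire closed_UNIV cG) auto
  then have "\<Inter>G \<noteq> {}" by auto
  then obtain B where B: "B \<in> \<Inter>G" by blast
  have L: "liouville_matrix X" if "\<And>q p. X \<in> G1 q p" "\<And>N. X \<in> G2 N" for X :: "real^'n^'m"
    using that unfolding liouville_matrix_def G1_def G2_def by auto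
  have "liouville_matrix B" using B by (intro L) (auto simp: G_def G0_def)
  moreover have "liouville_matrix (A - B)"
  proof (intro L)
    fix q p
    have "(\<lambda>B. A - B) -` G1 q p \<in> G" unfolding G_def G0_def
      by (rule UnI2, rule imageI, rule UnI1, rule range_eqI[of _ _ "(q,p)"]) simp
    then show "A - B \<in> G1 q p" using B by blast
  next
    fix N
    have "(\<lambda>B. A - B) -` G2 N \<in> G" unfolding G_def G0_def
      by (rule UnI2, rule imageI, rule UnI2, rule rangeI)
    then show "A - B \<in> G2 N" using B by blast
  qed
  ultimately show ?thesis by (intro exI[of _ B] exI[of _ "A - B"]) auto
qed

end
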